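(* Let $(x^k)$ be generated by the augmented Lagrangian method described below, where each step satisfies the inexactness assumption described below with $\varepsilon_k\downarrow0$, and let $\bar x$ be a limit point of $(x^k)$ along some subsequence $K\subset\mathbb{N}$ (i.e. $x^k\to_K\bar x$). If $\bar x$ is feasible for the GNEP (i.e. $g^\nu(\bar x)\le0$ and $h^\nu(\bar x)\le0$ for all $\nu$), then for every $\nu$ $$\nabla_{x^\nu}\theta_\nu(x^k)+\nabla_{x^\nu}g^\nu(x^k)\lambda^{\nu,k}+\nabla_{x^\nu}h^\nu(x^k)\mu^{\nu,k}\to_K0,$$ $$\min\{-g^\nu(x^k),\lambda^{\nu,k}\}\to_K0,\qquad\min\{-h^\nu(x^k),\mu^{\nu,k}\}\to_K0.$$
   Context: GNEP: $N$ players, variables $x=(x^1,\ldots,x^N)\in\mathbb{R}^n$, $x^\nu\in\mathbb{R}^{n_\nu}$. Player $\nu$ solves $\min_{x^\nu}\theta_\nu(x)$ s.t. $g^\nu(x)\le0$, $h^\nu(x)\le0$, with continuously differentiable $\theta_\nu:\mathbb{R}^n\to\mathbb{R}$, $g^\nu:\mathbb{R}^n\to\mathbb{R}^{m_\nu}$, $h^\nu:\mathbb{R}^n\to\mathbb{R}^{p_\nu}$ ($p_\nu=0$ allowed); $m=\sum m_\nu$, $p=\sum p_\nu$. Notation: $v_+=\max\{0,v\}$ componentwise; $\nabla f$ = transposed Jacobian, $\nabla_{x^\nu}f$ its rows for $x^\nu$; $\min$ componentwise; Euclidean norms; $\to_K$ = convergence along $k\in K$. Vectors in $\mathbb{R}^m$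 (resp. $\mathbb{R}^p$) are split into player blocks $\lambda^{\nu}\in\mathbb{R}^{m_\nu}$ (resp. $\mu^\nu\in\mathbb{R}^{p_\nu}$). Augmented Lagrangian of player $\nu$: $L_a^\nu(x,u;\rho)=\theta_\nu(x)+\frac{\rho}{2}\|(g^\nu(x)+u/\rho)_+\|^2$. Method: choose $x^0\in\mathbb{R}^n,\lambda^0\in\mathbb{R}^m,\mu^0\in\mathbb{R}^p$, an initial $u^0\in\mathbb{R}^m$, $u^{\max}\ge0$, and for each $\nu$: $\tau_\nu\in(0,1)$, $\gamma_\nu>1$, $\rho_{\nu,0}>0$. For $k=0,1,2,\dots$ (the method is assumed to run forever): (1) compute $(x^{k+1},\mu^{k+1})\in\mathbb{R}^{n+p}$ satisfying the inexactness assumption; (2) $\lambda^{\nu,k+1}=(u^{\nu,k}+\rho_{\nu,k}g^\nu(x^{k+1}))_+$; (3) for each $\nu$: if $\|\min\{-g^\nu(x^{k+1}),\lambda^{\nu,k+1}\}\|\le\tau_\nu\|\min\{-g^\nu(x^k),\lambda^{\nu,k}\}\|$ then $\rho_{\nu,k+1}=\rho_{\nu,k}$, else $\rho_{\nu,k+1}=\gamma_\nu\rho_{\nu,k}$; (4) $u^{k+1}=\min\{\lambda^{k+1},u^{\max}\}$ componentwise. Inexactness assumption: for all $k,\nu$, $\|\nabla_{x^\nu}L_a^\nu(x^{k+1},u^{\nu,k};\rho_{\nu,k})+\nabla_{x^\nu}h^\nu(x^{k+1})\mu^{\nu,k+1}\|\le\varepsilon_k$ and $\|\min\{-h^\nu(x^{k+1}),\mu^{\nu,k+1}\}\|\le\varepsilon_k'$,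 with $(\varepsilon_k)\subset[0,\infty)$ bounded and $\varepsilon'_k\to0$. *)

theory Defs
  imports "HOL-Analysis.Analysis"
begin

definition C1_fun :: "(real^'n \<Rightarrow> real) \<Rightarrow> bool" where
  "C1_fun f \<longleftrightarrow> (\<exists>f'. continuous_on UNIV f' \<and>
      (\<forall>x. (f has_derivative blinfun_apply (f' x)) (at x)))"

definition pgrad :: "(real^'n \<Rightarrow> real) \<Rightarrow> real^'n \<Rightarrow> 'n \<Rightarrow> real" where
  "pgrad f x i = frechet_derivative f (at x) (axis i 1)"

definition pos :: "real \<Rightarrow> real" where
  "pos v = max 0 v"

definition bnorm :: "'i set \<Rightarrow> ('i \<Rightarrow> real) \<Rightarrow> real" where
  "bnorm I v = sqrt (\<Sum>i\<in>I. (v i)^2)"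

definition aug_lag :: "(real^'n \<Rightarrow> real) \<Rightarrow> nat \<Rightarrow> (nat \<Rightarrow> real^'n \<Rightarrow> real)
    \<Rightarrow> real^'n \<Rightarrow> (nat \<Rightarrow> real) \<Rightarrow> real \<Rightarrow> real" where
  "aug_lag th mm gg x u r = th x + r / 2 * (bnorm {..<mm} (\<lambda>j. pos (gg j x + u j / r)))^2"

end

theory Submission
  imports Defs
begin

lemma C1_deriv: "C1_fun f \<Longrightarrow> (f has_derivative frechet_derivative f (at x)) (at x)"
  unfolding C1_fun_def by (meson differentiableI frechet_derivative_works)

lemma C1_cont: "C1_fun f \<Longrightarrow> isCont f x"
  using C1_deriv has_derivative_continuous by blast

lemma pos_cont: "isCont pos t"
  unfolding pos_def by (intro continuous_intros)

lemma pos_sq_deriv: "((\<lambda>t. (pos t)^2) has_real_derivative 2 * pos t) (at t)"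
proof -
  consider "t > 0" | "t < 0" | "t = 0" by linarith
  then show ?thesis
  proof cases
    case 1
    have "((\<lambda>t. t^2) has_real_derivative 2 * pos t) (at t)"
      using 1 by (auto intro!: derivative_eq_intros simp: pos_def)
    then show ?thesis
      by (rule has_field_derivative_transform_within_open[where S="{0<..}"])
         (use 1 in \<open>auto simp: pos_def\<close>)
  next
    case 2
    have "((\<lambda>t. 0) has_real_derivative 2 * pos t) (at t)"
      using 2 by (auto intro!: derivative_eq_intros simp: pos_def)
    then show ?thesis
      by (rule has_field_derivative_transform_within_open[where S="{..<0}"])
         (use 2 in \<open>auto simp: pos_def\<close>)
  next
    case 3
    have "(pos \<longlongrightarrow> pos 0) (at 0)" using pos_cont isCont_def by blast
    then have "(pos \<longlongrightarrow> 0) (at 0)" by (simp add: pos_def)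
    moreover have "\<forall>\<^sub>F y in at (0::real). pos y = ((pos y)^2 - (pos 0)^2) / (y - 0)"
      unfolding eventually_at_filter
      by (intro always_eventually) (auto simp: pos_def power2_eq_square max_def)
    ultimately have "((\<lambda>y. ((pos y)^2 - (pos 0)^2) / (y - 0)) \<longlongrightarrow> 2 * pos 0) (at 0)"
      by (simp add: tendsto_cong pos_def)
    then show ?thesis using 3 by (simp add: has_field_derivative_iff)
  qed
qed

lemma pos_scale: "(r::real) > 0 \<Longrightarrow> r * pos (a + b / r) = pos (b + r * a)"
  unfolding pos_def by (simp add: max_mult_distrib_left distrib_left mult.commute)

lemma aug_lag_pgrad:
  assumes th: "C1_fun th" and gg: "\<forall>j<mm. C1_fun (gg j)" and r: "r > 0"
  shows "pgrad (\<lambda>y. aug_lag th mm gg y u r) x c =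
     pgrad th x c + (\<Sum>j<mm. pgrad (gg j) x c * pos (u j + r * gg j x))"
proof -
  have eq: "(\<lambda>y. aug_lag th mm gg y u r) = (\<lambda>y. th y + r/2 * (\<Sum>j<mm. (pos (gg j y + u j / r))^2))"
    unfolding aug_lag_def bnorm_def by (simp add: sum_nonneg)
  have d: "((\<lambda>y. th y + r/2 * (\<Sum>j<mm. (pos (gg j y + u j / r))^2)) has_derivative
      (\<lambda>v. frechet_derivative th (at x) v + r/2 * (\<Sum>j<mm. 2 * pos (gg j x + u j / r) * frechet_derivative (gg j) (at x) v))) (at x)"
  proof (intro has_derivative_add has_derivative_mult_right has_derivative_sum C1_deriv th)
    fix j assume "j \<in> {..<mm}"
    then have gj: "C1_fun (gg j)" using gg by auto
    have a: "((\<lambda>y. gg j y + u j / r) has_derivative frechet_derivative (gg j) (at x)) (at x)"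
      using has_derivative_add_const[OF C1_deriv[OF gj]] by simp
    have b: "((\<lambda>t. (pos t)^2) has_derivative (\<lambda>h. 2 * pos (gg j x + u j / r) * h)) (at (gg j x + u j / r))"
      using pos_sq_deriv[of "gg j x + u j / r"] unfolding has_field_derivative_def by simp
    show "((\<lambda>y. (pos (gg j y + u j / r))^2) has_derivative
        (\<lambda>v. 2 * pos (gg j x + u j / r) * frechet_derivative (gg j) (at x) v)) (at x)"
      using has_derivative_compose[OF a b] by (simp add: o_def)
  qed
  have "pgrad (\<lambda>y. aug_lag th mm gg y u r) x c =
     frechet_derivative th (at x) (axis c 1) + r/2 * (\<Sum>j<mm. 2 * pos (gg j x + u j / r) * frechet_derivative (gg j) (at x) (axis c 1))"
    unfolding pgrad_def eq frechet_derivative_at[OF d, symmetric] by simp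
  also have "\<dots> = pgrad th x c + (\<Sum>j<mm. pgrad (gg j) x c * pos (u j + r * gg j x))"
    unfolding pgrad_def sum_distrib_left
    by (intro arg_cong2[where f="(+)"] refl sum.cong) (use r pos_scale in \<open>auto simp: field_simps\<close>)
  finally show ?thesis .
qed


lemma bnorm_nonneg: "0 \<le> bnorm I v"
  unfolding bnorm_def by (simp add: sum_nonneg)

lemma bnorm_tendsto0:
  assumes "finite I" "\<forall>j\<in>I. ((\<lambda>i. v i j) \<longlongrightarrow> 0) F"
  shows "((\<lambda>i. bnorm I (v i)) \<longlongrightarrow> 0) F"
proof -
  have "((\<lambda>i. sqrt (\<Sum>j\<in>I. (v i j)^2)) \<longlongrightarrow> sqrt (\<Sum>j\<in>I. 0^2)) F"
    using assms by (intro tendsto_intros) auto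
  then show ?thesis unfolding bnorm_def by simp
qed

theorem lemma4p5:
  fixes \<theta> :: "'p::finite \<Rightarrow> real^'n \<Rightarrow> real"
    and own :: "'n \<Rightarrow> 'p"
    and m p :: "'p \<Rightarrow> nat"
    and g h :: "'p \<Rightarrow> nat \<Rightarrow> real^'n \<Rightarrow> real"
    and x :: "nat \<Rightarrow> real^'n"
    and lam mu u :: "nat \<Rightarrow> 'p \<Rightarrow> nat \<Rightarrow> real"
    and rho :: "nat \<Rightarrow> 'p \<Rightarrow> real"
    and umax :: "'p \<Rightarrow> nat \<Rightarrow> real"
    and tau gam :: "'p \<Rightarrow> real"
    and eps eps' :: "nat \<Rightarrow> real"
    and s :: "nat \<Rightarrow> nat"
    and xbar :: "real^'n"
  assumes C1_theta: "\<forall>\<nu>. C1_fun (\<theta> \<nu>)"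
    and C1_g: "\<forall>\<nu>. \<forall>j<m \<nu>. C1_fun (g \<nu> j)"
    and C1_h: "\<forall>\<nu>. \<forall>j<p \<nu>. C1_fun (h \<nu> j)"
    and umax_nonneg: "\<forall>\<nu>. \<forall>j<m \<nu>. 0 \<le> umax \<nu> j"
    and tau: "\<forall>\<nu>. 0 < tau \<nu> \<and> tau \<nu> < 1"
    and gam: "\<forall>\<nu>. 1 < gam \<nu>"
    and rho0: "\<forall>\<nu>. 0 < rho 0 \<nu>"
    and lam_upd: "\<forall>k \<nu>. \<forall>j<m \<nu>.
        lam (Suc k) \<nu> j = pos (u k \<nu> j + rho k \<nu> * g \<nu> j (x (Suc k)))"
    and rho_upd: "\<forall>k \<nu>. rho (Suc k) \<nu> =
        (if bnorm {..<m \<nu>} (\<lambda>j. min (- g \<nu> j (x (Suc k))) (lam (Suc k) \<nu> j))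
              \<le> tau \<nu> * bnorm {..<m \<nu>} (\<lambda>j. min (- g \<nu> j (x k)) (lam k \<nu> j))
         then rho k \<nu> else gam \<nu> * rho k \<nu>)"
    and u_upd: "\<forall>k \<nu>. \<forall>j<m \<nu>. u (Suc k) \<nu> j = min (lam (Suc k) \<nu> j) (umax \<nu> j)"
    and inexact_grad: "\<forall>k \<nu>. bnorm {i. own i = \<nu>}
        (\<lambda>i. pgrad (\<lambda>y. aug_lag (\<theta> \<nu>) (m \<nu>) (g \<nu>) y (u k \<nu>) (rho k \<nu>)) (x (Suc k)) i
            + (\<Sum>j<p \<nu>. pgrad (h \<nu> j) (x (Suc k)) i * mu (Suc k) \<nu> j)) \<le> eps k"
    and inexact_compl: "\<forall>k \<nu>. bnorm {..<p \<nu>} (\<lambda>j. min (- h \<nu> j (x (Suc k))) (mu (Suc k) \<nu> j)) \<le> eps' k"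
    and eps_nonneg: "\<forall>k. 0 \<le> eps k"
    and eps_dec: "decseq eps"
    and eps_lim: "eps \<longlonglongrightarrow> 0"
    and eps'_lim: "eps' \<longlonglongrightarrow> 0"
    and subseq: "strict_mono s"
    and conv: "(\<lambda>i. x (s i)) \<longlonglongrightarrow> xbar"
    and feasible: "\<forall>\<nu>. (\<forall>j<m \<nu>. g \<nu> j xbar \<le> 0) \<and> (\<forall>j<p \<nu>. h \<nu> j xbar \<le> 0)"
  shows "\<forall>\<nu>.
     (\<lambda>i. bnorm {c. own c = \<nu>} (\<lambda>c. pgrad (\<theta> \<nu>) (x (s i)) c
          + (\<Sum>j<m \<nu>. pgrad (g \<nu> j) (x (s i)) c * lam (s i) \<nu> j)
          + (\<Sum>j<p \<nu>. pgrad (h \<nu> j) (x (s i)) c * mu (s i) \<nu> j))) \<longlonglongrightarrow> 0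
   \<and> (\<lambda>i. bnorm {..<m \<nu>} (\<lambda>j. min (- g \<nu> j (x (s i))) (lam (s i) \<nu> j))) \<longlonglongrightarrow> 0
   \<and> (\<lambda>i. bnorm {..<p \<nu>} (\<lambda>j. min (- h \<nu> j (x (s i))) (mu (s i) \<nu> j))) \<longlonglongrightarrow> 0"
  proof (intro allI conjI)
  fix \<nu>
  have rpos: "0 < rho k \<nu>" for k
  proof (induction k)
    case 0 then show ?case using rho0 by auto
  next
    case (Suc k) then show ?case using rho_upd[rule_format, of k \<nu>] gam[rule_format, of \<nu>] by auto
  qed
  have rmono: "rho k \<nu> \<le> rho (Suc k) \<nu>" for k
    using rho_upd[rule_format, of k \<nu>] gam[rule_format, of \<nu>] rpos[of k] by auto
  have rinc: "incseq (\<lambda>k. rho k \<nu>)" using rmono by (simp add: incseq_SucI)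
  define t where "t i = s i - 1" for i
  have sge: "i \<le> s i" for i using seq_suble[OF subseq] by auto
  have ev_s: "\<forall>\<^sub>F i in sequentially. s i = Suc (t i) \<and> 1 \<le> t i"
  proof (rule eventually_sequentiallyI[of 2])
    fix i :: nat assume "2 \<le> i" then show "s i = Suc (t i) \<and> 1 \<le> t i" using sge[of i] by (auto simp: t_def)
  qed
  have tlim: "filterlim t at_top sequentially"
    unfolding filterlim_at_top
  proof
    fix Z show "\<forall>\<^sub>F i in sequentially. Z \<le> t i"
    proof (rule eventually_sequentiallyI[of "Z+1"])
      fix i assume "Z + 1 \<le> i" then show "Z \<le> t i" using sge[of i] unfolding t_def by linarith
    qed
  qed
  have eps_t: "(\<lambda>i. eps (t i)) \<longlonglongrightarrow> 0" using filterlim_compose[OF eps_lim tlim] .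
  have eps'_t: "(\<lambda>i. eps' (t i)) \<longlonglongrightarrow> 0" using filterlim_compose[OF eps'_lim tlim] .

  have gradk: "bnorm {c. own c = \<nu>} (\<lambda>c. pgrad (\<theta> \<nu>) (x (Suc k)) c
          + (\<Sum>j<m \<nu>. pgrad (g \<nu> j) (x (Suc k)) c * lam (Suc k) \<nu> j)
          + (\<Sum>j<p \<nu>. pgrad (h \<nu> j) (x (Suc k)) c * mu (Suc k) \<nu> j)) \<le> eps k" for k
  proof -
    have "(\<lambda>c. pgrad (\<theta> \<nu>) (x (Suc k)) c
          + (\<Sum>j<m \<nu>. pgrad (g \<nu> j) (x (Suc k)) c * lam (Suc k) \<nu> j)
          + (\<Sum>j<p \<nu>. pgrad (h \<nu> j) (x (Suc k)) c * mu (Suc k) \<nu> j)) =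
        (\<lambda>i. pgrad (\<lambda>y. aug_lag (\<theta> \<nu>) (m \<nu>) (g \<nu>) y (u k \<nu>) (rho k \<nu>)) (x (Suc k)) i
            + (\<Sum>j<p \<nu>. pgrad (h \<nu> j) (x (Suc k)) i * mu (Suc k) \<nu> j))"
    proof (rule ext)
      fix c
      have "(\<Sum>j<m \<nu>. pgrad (g \<nu> j) (x (Suc k)) c * lam (Suc k) \<nu> j) =
            (\<Sum>j<m \<nu>. pgrad (g \<nu> j) (x (Suc k)) c * pos (u k \<nu> j + rho k \<nu> * g \<nu> j (x (Suc k))))"
        by (rule sum.cong) (simp_all add: lam_upd)
      then show "pgrad (\<theta> \<nu>) (x (Suc k)) c
          + (\<Sum>j<m \<nu>. pgrad (g \<nu> j) (x (Suc k)) c * lam (Suc k) \<nu> j)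
          + (\<Sum>j<p \<nu>. pgrad (h \<nu> j) (x (Suc k)) c * mu (Suc k) \<nu> j) =
        pgrad (\<lambda>y. aug_lag (\<theta> \<nu>) (m \<nu>) (g \<nu>) y (u k \<nu>) (rho k \<nu>)) (x (Suc k)) c
            + (\<Sum>j<p \<nu>. pgrad (h \<nu> j) (x (Suc k)) c * mu (Suc k) \<nu> j)"
        using aug_lag_pgrad[OF C1_theta[rule_format] C1_g[THEN spec[of _ \<nu>]] rpos[of k], of _ "u k \<nu>" "x (Suc k)" c]
        by simp
    qed
    then show ?thesis using inexact_grad[THEN spec[of _ k], THEN spec[of _ \<nu>]] by (simp only:)
  qed
  show "(\<lambda>i. bnorm {c. own c = \<nu>} (\<lambda>c. pgrad (\<theta> \<nu>) (x (s i)) c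
          + (\<Sum>j<m \<nu>. pgrad (g \<nu> j) (x (s i)) c * lam (s i) \<nu> j)
          + (\<Sum>j<p \<nu>. pgrad (h \<nu> j) (x (s i)) c * mu (s i) \<nu> j))) \<longlonglongrightarrow> 0"
  proof (rule Lim_null_comparison[OF _ eps_t])
    show "\<forall>\<^sub>F i in sequentially. norm (bnorm {c. own c = \<nu>} (\<lambda>c. pgrad (\<theta> \<nu>) (x (s i)) c
          + (\<Sum>j<m \<nu>. pgrad (g \<nu> j) (x (s i)) c * lam (s i) \<nu> j)
          + (\<Sum>j<p \<nu>. pgrad (h \<nu> j) (x (s i)) c * mu (s i) \<nu> j))) \<le> eps (t i)"
      using ev_s by eventually_elim (simp add: abs_of_nonneg[OF bnorm_nonneg] gradk)
  qed

  show "(\<lambda>i. bnorm {..<p \<nu>} (\<lambda>j. min (- h \<nu> j (x (s i))) (mu (s i) \<nu> j))) \<longlonglongrightarrow> 0"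
  proof (rule Lim_null_comparison[OF _ eps'_t])
    show "\<forall>\<^sub>F i in sequentially. norm (bnorm {..<p \<nu>} (\<lambda>j. min (- h \<nu> j (x (s i))) (mu (s i) \<nu> j))) \<le> eps' (t i)"
      using ev_s by eventually_elim (simp add: abs_of_nonneg[OF bnorm_nonneg] inexact_compl)
  qed

  define B where "B k = bnorm {..<m \<nu>} (\<lambda>j. min (- g \<nu> j (x k)) (lam k \<nu> j))" for k
  show "(\<lambda>i. bnorm {..<m \<nu>} (\<lambda>j. min (- g \<nu> j (x (s i))) (lam (s i) \<nu> j))) \<longlonglongrightarrow> 0"
  proof (cases "\<exists>k0. \<forall>k\<ge>k0. rho (Suc k) \<nu> = rho k \<nu>")
    case True
    then obtain k0 where k0: "\<forall>k\<ge>k0. rho (Suc k) \<nu> = rho k \<nu>" by blast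
    have t0: "0 < tau \<nu>" "tau \<nu> < 1" using tau by auto
    have step: "B (Suc k) \<le> tau \<nu> * B k" if "k \<ge> k0" for k
    proof -
      have "rho (Suc k) \<nu> = rho k \<nu>" using k0 that by auto
      moreover have "gam \<nu> * rho k \<nu> \<noteq> rho k \<nu>" using gam[rule_format, of \<nu>] rpos[of k] by auto
      ultimately show ?thesis using rho_upd[rule_format, of k \<nu>] unfolding B_def by (auto split: if_splits)
    qed
    have geo: "B (k0 + n) \<le> tau \<nu> ^ n * B k0" for n
    proof (induction n)
      case 0 then show ?case by simp
    next
      case (Suc n)
      have "B (k0 + Suc n) \<le> tau \<nu> * B (k0 + n)" using step[of "k0+n"] by simp
      also have "\<dots> \<le> tau \<nu> * (tau \<nu> ^ n * B k0)" using Suc t0 by (intro mult_left_mono) auto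
      finally show ?case by simp
    qed
    have Blim: "B \<longlonglongrightarrow> 0"
    proof (rule Lim_null_comparison)
      show "(\<lambda>i. tau \<nu> ^ i * (B k0 / tau \<nu> ^ k0)) \<longlonglongrightarrow> 0"
        using t0 by (intro tendsto_mult_left_zero LIMSEQ_power_zero) auto
      show "\<forall>\<^sub>F i in sequentially. norm (B i) \<le> tau \<nu> ^ i * (B k0 / tau \<nu> ^ k0)"
      proof (rule eventually_sequentiallyI[of k0])
        fix i assume "k0 \<le> i"
        then obtain n where n: "i = k0 + n" using le_Suc_ex by blast
        have "tau \<nu> ^ i * (B k0 / tau \<nu> ^ k0) = tau \<nu> ^ n * B k0"
          using t0 by (simp add: n power_add)
        then show "norm (B i) \<le> tau \<nu> ^ i * (B k0 / tau \<nu> ^ k0)"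
          using geo[of n] n bnorm_nonneg[of "{..<m \<nu>}"] unfolding B_def by auto
      qed
    qed
    show ?thesis using LIMSEQ_subseq_LIMSEQ[OF Blim subseq] unfolding B_def o_def .
  next
    case False
    then have inc: "\<exists>k\<ge>k0. rho (Suc k) \<nu> = gam \<nu> * rho k \<nu>" for k0
    proof -
      obtain k where k: "k \<ge> k0" "rho (Suc k) \<nu> \<noteq> rho k \<nu>" using False by blast
      then have "rho (Suc k) \<nu> = gam \<nu> * rho k \<nu>"
        using rho_upd[rule_format, of k \<nu>] by (auto split: if_splits)
      then show ?thesis using k by blast
    qed
    have g1: "1 < gam \<nu>" using gam by auto
    have big: "\<exists>k. rho 0 \<nu> * gam \<nu> ^ n \<le> rho k \<nu>" for n
    proof (induction n)
      case 0 then show ?case by auto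
    next
      case (Suc n)
      then obtain k where k: "rho 0 \<nu> * gam \<nu> ^ n \<le> rho k \<nu>" by blast
      obtain k' where k': "k' \<ge> k" "rho (Suc k') \<nu> = gam \<nu> * rho k' \<nu>" using inc by blast
      have "rho k \<nu> \<le> rho k' \<nu>" using rinc k'(1) by (simp add: incseq_def)
      then have "rho 0 \<nu> * gam \<nu> ^ Suc n \<le> gam \<nu> * rho k' \<nu>"
        using k g1 by (simp add: mult.left_commute)
      then show ?case using k' by metis
    qed
    have rlim: "filterlim (\<lambda>k. rho k \<nu>) at_top sequentially"
      unfolding filterlim_at_top
    proof
      fix Z :: real
      obtain n where n: "Z / rho 0 \<nu> < gam \<nu> ^ n" using real_arch_pow[OF g1] by blast
      obtain k where k: "rho 0 \<nu> * gam \<nu> ^ n \<le> rho k \<nu>" using big by blast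
      have "Z \<le> rho 0 \<nu> * gam \<nu> ^ n" using n rpos[of 0] by (simp add: field_simps)
      then show "\<forall>\<^sub>F k in sequentially. Z \<le> rho k \<nu>"
        using k rinc by (intro eventually_sequentiallyI[of k]) (force simp: incseq_def)
    qed
    have rtlim: "filterlim (\<lambda>i. rho (t i) \<nu>) at_top sequentially"
      using filterlim_compose[OF rlim tlim] .
    have comp: "(\<lambda>i. min (- g \<nu> j (x (s i))) (lam (s i) \<nu> j)) \<longlonglongrightarrow> 0" if j: "j < m \<nu>" for j
    proof -
      have gconv: "(\<lambda>i. g \<nu> j (x (s i))) \<longlonglongrightarrow> g \<nu> j xbar"
        using isCont_tendsto_compose[OF C1_cont conv] C1_g j by auto
      have gle: "g \<nu> j xbar \<le> 0" using feasible j by auto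
      have lamnn: "\<forall>\<^sub>F i in sequentially. 0 \<le> lam (s i) \<nu> j"
        using ev_s by eventually_elim (use lam_upd j in \<open>auto simp: pos_def\<close>)
      show ?thesis
      proof (cases "g \<nu> j xbar = 0")
        case True
        have "(\<lambda>i. \<bar>g \<nu> j (x (s i))\<bar>) \<longlonglongrightarrow> 0"
          using tendsto_rabs[OF gconv] True by simp
        then show ?thesis
          by (rule Lim_null_comparison[rotated]) (use lamnn in \<open>eventually_elim, auto\<close>)
      next
        case False
        define c where "c = g \<nu> j xbar"
        have c: "c < 0" using False gle c_def by auto
        have e1: "\<forall>\<^sub>F i in sequentially. g \<nu> j (x (s i)) < c / 2"
          using order_tendstoD(2)[OF gconv, of "c / 2"] c unfolding c_def by linarith
        have e2: "\<forall>\<^sub>F i in sequentially. 2 * umax \<nu> j / (- c) \<le> rho (t i) \<nu>"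
          using rtlim unfolding filterlim_at_top by blast
        have "\<forall>\<^sub>F i in sequentially. min (- g \<nu> j (x (s i))) (lam (s i) \<nu> j) = 0"
          using ev_s e1 e2
        proof eventually_elim
          case (elim i)
          define k where "k = t i - 1"
          have tk: "t i = Suc k" using elim k_def by auto
          have ule: "u (t i) \<nu> j \<le> umax \<nu> j" using u_upd j tk by auto
          have rp: "0 < rho (t i) \<nu>" by (rule rpos)
          have a1: "rho (t i) \<nu> * g \<nu> j (x (s i)) \<le> rho (t i) \<nu> * (c / 2)"
            using rp elim by (intro mult_left_mono) auto
          have "2 * umax \<nu> j \<le> rho (t i) \<nu> * (- c)" using elim c by (simp add: field_simps)
          then have a2: "rho (t i) \<nu> * (c / 2) \<le> - umax \<nu> j" by (simp add: algebra_simps)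
          have "lam (s i) \<nu> j = pos (u (t i) \<nu> j + rho (t i) \<nu> * g \<nu> j (x (s i)))"
            using lam_upd j elim by auto
          also have "\<dots> = 0" using a1 a2 ule by (simp add: pos_def)
          finally show ?case using elim c by auto
        qed
        then show ?thesis by (rule tendsto_eventually)
      qed
    qed
    show ?thesis by (rule bnorm_tendsto0) (use comp in auto)
  qed
qed

end
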